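(* Let $A\in\mathcal{PM}(n)$ be the poset matrix of an NL poset $P$ on $X_n$, let $T$ be the set of order ideals of $P$, let $S\in T$, and let $v\in\{0,1\}^n$ be the characteristic vector of $S$. Then $$\mathrm{Grow}_S(T)=\mathcal I(P_{A^v}),$$ the set of order ideals of the NL poset on $X_{n+1}$ whose poset matrix is $A^v=\begin{bmatrix}A&\mathbf 0\\ v&1\end{bmatrix}$.
   Context: Let $X_n=\{0,1,\ldots,n-1\}$. A naturally labeled (NL) poset on $X_n$ is a partial order $\preceq$ on $X_n$ such that $x\preceq y$ implies $x\le y$ in the usual integer order. Its poset matrix is the $n\times n$ $(0,1)$-matrix $A=(a_{i,j})_{i,j\in X_n}$ with $a_{i,j}=1$ if $j\preceq i$ and $0$ otherwise; $\mathcal{PM}(n)$ is the set of all such matrices. An order ideal is a downward closed subset. For a family $T$ of subsets of $X_n$ (closed under union and intersection, containing $\emptyset$ and $X_n$) and $S\in T$, $\mathrm{Grow}_S(T)$ is the family of subsets of $X_{n+1}$ obtained by doubling the interval $[S,X_n]$ of $T$, namely $\mathrm{Grow}_S(T)=T\cup\{U\cup\{n\}: U\in T,\ S\subseteq U\}$. *)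

theory Defs
  imports Main
begin

definition NL_poset :: "nat \<Rightarrow> (nat \<Rightarrow> nat \<Rightarrow> bool) \<Rightarrow> bool" where
  "NL_poset n le \<longleftrightarrow>
     (\<forall>x y. le x y \<longrightarrow> x < n \<and> y < n) \<and>
     (\<forall>x<n. le x x) \<and>
     (\<forall>x y. le x y \<and> le y x \<longrightarrow> x = y) \<and>
     (\<forall>x y z. le x y \<and> le y z \<longrightarrow> le x z) \<and>
     (\<forall>x y. le x y \<longrightarrow> x \<le> y)"

text \<open>n x n (0,1)-matrices are functions nat => nat => nat, entries outside
  the index range X_n being 0.  Poset matrix: a_{i,j} = 1 iff j precedes i.\<close>
definition poset_matrix :: "nat \<Rightarrow> (nat \<Rightarrow> nat \<Rightarrow> bool) \<Rightarrow> nat \<Rightarrow> nat \<Rightarrow> nat" where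
  "poset_matrix n le = (\<lambda>i j. if i < n \<and> j < n \<and> le j i then 1 else 0)"

definition PM :: "nat \<Rightarrow> (nat \<Rightarrow> nat \<Rightarrow> nat) set" where
  "PM n = {poset_matrix n le | le. NL_poset n le}"

definition matrix_poset :: "nat \<Rightarrow> (nat \<Rightarrow> nat \<Rightarrow> nat) \<Rightarrow> nat \<Rightarrow> nat \<Rightarrow> bool" where
  "matrix_poset n A = (\<lambda>j i. i < n \<and> j < n \<and> A i j = 1)"

definition order_ideals :: "nat \<Rightarrow> (nat \<Rightarrow> nat \<Rightarrow> bool) \<Rightarrow> nat set set" where
  "order_ideals n le = {S. S \<subseteq> {..<n} \<and> (\<forall>x y. le x y \<and> y \<in> S \<longrightarrow> x \<in> S)}"

definition char_vec :: "nat \<Rightarrow> nat set \<Rightarrow> nat \<Rightarrow> nat" where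
  "char_vec n S = (\<lambda>j. if j < n \<and> j \<in> S then 1 else 0)"

text \<open>A^v = [[A, 0], [v, 1]] of size (n+1) x (n+1).\<close>
definition extend_matrix :: "nat \<Rightarrow> (nat \<Rightarrow> nat \<Rightarrow> nat) \<Rightarrow> (nat \<Rightarrow> nat) \<Rightarrow> nat \<Rightarrow> nat \<Rightarrow> nat" where
  "extend_matrix n A v = (\<lambda>i j.
     if i < n \<and> j < n then A i j
     else if i = n \<and> j < n then v j
     else if i = n \<and> j = n then 1 else 0)"

definition Grow :: "nat \<Rightarrow> nat set \<Rightarrow> nat set set \<Rightarrow> nat set set" where
  "Grow n S T = T \<union> {insert n U | U. U \<in> T \<and> S \<subseteq> U}"

end

theory Submission
  imports Defs
begin

theorem theorem5p9:
  fixes n :: nat and P :: "nat \<Rightarrow> nat \<Rightarrow> bool" and A :: "nat \<Rightarrow> nat \<Rightarrow> nat"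
    and T :: "nat set set" and S :: "nat set" and v :: "nat \<Rightarrow> nat"
  assumes "NL_poset n P"
    and "A = poset_matrix n P"
    and "T = order_ideals n P"
    and "S \<in> T"
    and "v = char_vec n S"
  shows "extend_matrix n A v \<in> PM (Suc n) \<and>
         Grow n S T = order_ideals (Suc n) (matrix_poset (Suc n) (extend_matrix n A v))"
proof -
  let ?E = "extend_matrix n A v"
  let ?Q = "matrix_poset (Suc n) ?E"
  have NP: "\<forall>x y. P x y \<longrightarrow> x < n \<and> y < n" "\<forall>x<n. P x x"
     "\<forall>x y. P x y \<and> P y x \<longrightarrow> x = y" "\<forall>x y z. P x y \<and> P y z \<longrightarrow> P x z"
     "\<forall>x y. P x y \<longrightarrow> x \<le> y"
    using assms(1) unfolding NL_poset_def by blast+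
  have Sid: "S \<subseteq> {..<n}" "\<And>x y. P x y \<Longrightarrow> y \<in> S \<Longrightarrow> x \<in> S"
    using assms(3,4) unfolding order_ideals_def by blast+
  have Q: "?Q x y \<longleftrightarrow> (x < n \<and> y < n \<and> P x y) \<or> (y = n \<and> x < n \<and> x \<in> S) \<or> (x = n \<and> y = n)"
    for x y
    using NP(1)
    unfolding matrix_poset_def extend_matrix_def assms(2,5) poset_matrix_def char_vec_def
    by auto
  have NQ: "NL_poset (Suc n) ?Q"
    unfolding NL_poset_def
  proof (intro conjI allI impI)
    fix x y z assume "?Q x y \<and> ?Q y z" then show "?Q x z"
      unfolding Q using NP(1,4) Sid(2) by blast
  next
    fix x y assume "?Q x y \<and> ?Q y x" then show "x = y"
      unfolding Q using NP(3) by blast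
  qed (auto simp: Q dest: NP(1)[rule_format] NP(5)[rule_format] intro: NP(2)[rule_format])
  have E01: "?E i j = (if i < Suc n \<and> j < Suc n \<and> ?Q j i then 1 else 0)" for i j
    unfolding matrix_poset_def extend_matrix_def assms(2,5) poset_matrix_def char_vec_def
    by auto
  have "?E = poset_matrix (Suc n) ?Q"
    unfolding poset_matrix_def using E01 by (intro ext) simp
  hence part1: "?E \<in> PM (Suc n)" unfolding PM_def using NQ by blast
  have part2: "Grow n S T = order_ideals (Suc n) ?Q"
  proof (rule set_eqI)
    fix U
    show "U \<in> Grow n S T \<longleftrightarrow> U \<in> order_ideals (Suc n) ?Q"
    proof
      assume "U \<in> Grow n S T"
      then show "U \<in> order_ideals (Suc n) ?Q"
        unfolding Grow_def assms(3) order_ideals_def Q using NP(1) by auto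
    next
      assume U: "U \<in> order_ideals (Suc n) ?Q"
      have Usub: "U \<subseteq> {..<Suc n}" and Ucl: "\<And>x y. ?Q x y \<Longrightarrow> y \<in> U \<Longrightarrow> x \<in> U"
        using U unfolding order_ideals_def by blast+
      have Pcl: "\<And>x y. P x y \<Longrightarrow> y \<in> U \<Longrightarrow> x \<in> U"
        using Ucl NP(1) unfolding Q by blast
      show "U \<in> Grow n S T"
      proof (cases "n \<in> U")
        case False
        have "U \<subseteq> {..<n}" using Usub False by (auto simp: less_Suc_eq)
        then have "U \<in> T" unfolding assms(3) order_ideals_def using Pcl by blast
        then show ?thesis unfolding Grow_def by blast
      next
        case True
        have "U - {n} \<subseteq> {..<n}" using Usub by (auto simp: less_Suc_eq)
        moreover have "\<And>x y. P x y \<Longrightarrow> y \<in> U - {n} \<Longrightarrow> x \<in> U - {n}"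
          using Pcl NP(1) by blast
        ultimately have "U - {n} \<in> T" unfolding assms(3) order_ideals_def by blast
        moreover have "S \<subseteq> U - {n}"
        proof
          fix x assume "x \<in> S"
          then have "x < n" using Sid(1) by blast
          then have "?Q x n" unfolding Q using \<open>x \<in> S\<close> by blast
          then show "x \<in> U - {n}" using Ucl True \<open>x < n\<close> by blast
        qed
        moreover have "U = insert n (U - {n})" using True by blast
        ultimately show ?thesis unfolding Grow_def by blast
      qed
    qed
  qed
  show ?thesis using part1 part2 by blast
qed

end
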